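(* For all $m\in\mathbb{N}$: if $m$ is even, then $\frac{2^m}{3}-\frac{2^{2k}}{3}\in S_m$ for every integer $k$ with $0\leq k\leq\frac{m-4}{2}$; if $m$ is odd, then $\frac{2^m}{3}-\frac{2^{2k+1}}{3}\in S_m$ for every integer $k$ with $0\leq k\leq\frac{m-5}{2}$.
   Context: $\mathbb{N}=\{1,2,3,\dots\}$. The Collatz map $T:\mathbb{N}\to\mathbb{N}$ is $T(n)=\frac{3n+1}{2}$ if $n$ is odd and $T(n)=\frac{n}{2}$ if $n$ is even; $T^{(k)}$ denotes the $k$-fold composition. The total stopping time is $\sigma_\infty(1)=0$ and, for $n\geq 2$, $\sigma_\infty(n)=\inf\{k\in\mathbb{N}\cup\{\infty\} : T^{(k)}(n)=1\}$. Let $S_0=\{1\}$ and $S_k=\{n\in\mathbb{N}:\sigma_\infty(n)=k\}$ for $k\geq 1$. *)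

theory Defs
  imports Complex_Main "HOL-Library.Extended_Nat"
begin

definition collatzT :: "nat \<Rightarrow> nat" where
  "collatzT n = (if odd n then (3 * n + 1) div 2 else n div 2)"

definition sigma_inf :: "nat \<Rightarrow> enat" where
  "sigma_inf n = (if n = 1 then 0
     else if (\<exists>k\<ge>1. (collatzT ^^ k) n = 1)
          then enat (LEAST k. k \<ge> 1 \<and> (collatzT ^^ k) n = 1) else \<infinity>)"

definition S :: "nat \<Rightarrow> nat set" where
  "S k = (if k = 0 then {1} else {n. n \<ge> 1 \<and> sigma_inf n = enat k})"

end

theory Submission
  imports Defs
begin

lemma T_double: "collatzT (2 * x) = x"
  by (simp add: collatzT_def)

lemma iter_pow: "(collatzT ^^ i) (2 ^ (i + d) * x) = 2 ^ d * x"
proof (induction i)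
  case 0 then show ?case by simp
next
  case (Suc i)
  have "(collatzT ^^ Suc i) (2 ^ (Suc i + d) * x) = (collatzT ^^ i) (collatzT (2 * (2 ^ (i + d) * x)))"
  proof -
    have "2 ^ (Suc i + d) * x = 2 * (2 ^ (i + d) * x)" by simp
    thus ?thesis by (simp only: funpow_Suc_right comp_apply)
  qed
  also have "\<dots> = 2 ^ d * x" using Suc by (simp only: T_double)
  finally show ?case .
qed

lemma exists_a: "\<exists>a::nat. 3 * a + 1 = 4 ^ h"
proof (induction h)
  case 0 then show ?case by (rule exI[of _ 0]) simp
next
  case (Suc h)
  then obtain a :: nat where "3 * a + 1 = 4 ^ h" by blast
  then show ?case by (intro exI[of _ "4 * a + 1"]) simp
qed

lemma key:
  fixes e h a :: nat
  assumes h: "h \<ge> 2" and a: "3 * a + 1 = 4 ^ h"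
  shows "sigma_inf (2 ^ e * a) = enat (e + 2 * h)"
proof -
  have "(4::nat) ^ 2 \<le> 4 ^ h" using h by (intro power_increasing) auto
  hence a5: "a \<ge> 5" using a by simp
  have "even ((4::nat) ^ h)" using h by simp
  hence aodd: "odd a" using a by (metis even_add even_mult_iff odd_numeral odd_one)
  have Ta: "collatzT a = 2 ^ (2 * h - 1)"
  proof -
    have "(4::nat) ^ h = 2 ^ (2 * h)" by (simp add: power_mult)
    also have "2 * h = Suc (2 * h - 1)" using h by simp
    finally have "(3 * a + 1) = 2 * 2 ^ (2 * h - 1)" using a by simp
    thus ?thesis using aodd by (simp add: collatzT_def)
  qed
  let ?n = "2 ^ e * a"
  have step1: "(collatzT ^^ i) ?n = 2 ^ (e - i) * a" if "i \<le> e" for i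
    using iter_pow[of i "e - i" a] that by simp
  have step2: "(collatzT ^^ (e + 1 + t)) ?n = 2 ^ (2 * h - 1 - t)" if "t \<le> 2 * h - 1" for t
  proof -
    have "(collatzT ^^ (e + 1 + t)) ?n = (collatzT ^^ t) (collatzT ((collatzT ^^ e) ?n))"
    proof -
      have "e + 1 + t = Suc t + e" by simp
      thus ?thesis by (simp only: funpow_add funpow_Suc_right comp_apply)
    qed
    also have "\<dots> = (collatzT ^^ t) (2 ^ (t + (2 * h - 1 - t)) * 1)"
    proof -
      have "t + (2 * h - 1 - t) = 2 * h - 1" using that by simp
      thus ?thesis using step1[of e] Ta by simp
    qed
    also have "\<dots> = 2 ^ (2 * h - 1 - t)" by (subst iter_pow) simp
    finally show ?thesis .
  qed
  have hit: "(collatzT ^^ (e + 2 * h)) ?n = 1"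
    using step2[of "2 * h - 1"] h by simp
  have nohit: "(collatzT ^^ i) ?n \<noteq> 1" if "i < e + 2 * h" for i
  proof (cases "i \<le> e")
    case True
    then show ?thesis using step1[OF True] a5 by simp
  next
    case False
    define t where "t = i - e - 1"
    have t: "i = e + 1 + t" using False unfolding t_def by simp
    hence "t < 2 * h - 1" using that by simp
    then show ?thesis using step2[of t] t by simp
  qed
  have n1: "?n \<noteq> 1" using a5 by simp
  have L: "(LEAST k. k \<ge> 1 \<and> (collatzT ^^ k) ?n = 1) = e + 2 * h"
    apply (rule Least_equality)
    using hit h apply simp
    using nohit not_less by blast
  have ex: "\<exists>k\<ge>1. (collatzT ^^ k) ?n = 1" using hit h by (intro exI[of _ "e + 2 * h"]) simp
  show ?thesis unfolding sigma_inf_def using n1 ex L by (auto simp del: One_nat_def)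
qed

lemma general:
  fixes e h :: nat
  assumes "h \<ge> 2"
  shows "\<exists>n\<in>S (e + 2 * h). real n = 2 ^ (e + 2 * h) / 3 - 2 ^ e / 3"
proof -
  obtain a :: nat where a: "3 * a + 1 = 4 ^ h" using exists_a[of h] by blast
  have sig: "sigma_inf (2 ^ e * a) = enat (e + 2 * h)" using key[OF assms a] .
  have "(4::nat) ^ 1 < 4 ^ h" using assms by (intro power_strict_increasing) auto
  hence a5: "a \<ge> 1" using a by (cases a) auto
  have mem: "2 ^ e * a \<in> S (e + 2 * h)" using sig assms a5 by (simp add: S_def)
  have "real (3 * a + 1) = 4 ^ h" using a by (metis of_nat_numeral of_nat_power)
  hence ra: "3 * real a = 4 ^ h - 1" by simp
  have "(2::real) ^ (e + 2 * h) = 2 ^ e * 4 ^ h" by (simp add: power_add power_mult)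
  moreover have "3 * real (2 ^ e * a) = 2 ^ e * (3 * real a)" by simp
  moreover have "(2::real) ^ e * (3 * real a) = 2 ^ e * (4 ^ h - 1)" using ra by simp
  ultimately have "3 * real (2 ^ e * a) = 2 ^ (e + 2 * h) - 2 ^ e"
    by (simp add: right_diff_distrib)
  hence "real (2 ^ e * a) = 2 ^ (e + 2 * h) / 3 - 2 ^ e / 3" by simp
  thus ?thesis using mem by blast
qed

theorem mainTheorem5:
  fixes m :: nat
  assumes "m \<ge> 1"
  shows "(even m \<longrightarrow> (\<forall>k::nat. real k \<le> (real m - 4) / 2 \<longrightarrow>
            (\<exists>n\<in>S m. real n = 2 ^ m / 3 - 2 ^ (2 * k) / 3)))
       \<and> (odd m \<longrightarrow> (\<forall>k::nat. real k \<le> (real m - 5) / 2 \<longrightarrow>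
            (\<exists>n\<in>S m. real n = 2 ^ m / 3 - 2 ^ (2 * k + 1) / 3)))"
proof (intro conjI impI allI)
  fix k :: nat assume ev: "even m" and k: "real k \<le> (real m - 4) / 2"
  hence "real (2 * k + 4) \<le> real m" by simp
  hence "2 * k + 4 \<le> m" by linarith
  then obtain h where h: "m = 2 * k + 2 * h" "h \<ge> 2" using ev
    by (intro that[of "(m - 2 * k) div 2"]) presburger+
  show "\<exists>n\<in>S m. real n = 2 ^ m / 3 - 2 ^ (2 * k) / 3" using general[OF h(2), of "2*k"] h(1) by simp
next
  fix k :: nat assume od: "odd m" and k: "real k \<le> (real m - 5) / 2"
  hence "real (2 * k + 5) \<le> real m" by simp
  hence "2 * k + 5 \<le> m" by linarith
  then obtain h where h: "m = (2 * k + 1) + 2 * h" "h \<ge> 2" using od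
    by (intro that[of "(m - 2 * k) div 2"]) presburger+
  show "\<exists>n\<in>S m. real n = 2 ^ m / 3 - 2 ^ (2 * k + 1) / 3" using general[OF h(2), of "2*k+1"] h(1) by simp
qed

end
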